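(* For every $n\ge2$, the inverse NLFT map $\mathtt S_n\to\mathbb C^n$, $(\mathbf a,\mathbf b)\mapsto\boldsymbol\gamma$, is not uniformly continuous when $\mathtt S_n\subseteq\mathbb C^n\times\mathbb C^n$ and $\mathbb C^n$ carry the Euclidean metric. Explicitly, for $k\ge2$ the pairs $\mathbf a^{(k)}=(\frac1k,0,\dots,0,\sqrt{\frac12-\frac1{k^2}})$, $\mathbf b^{(k)}=(\sqrt{\frac12-\frac1{k^2}},0,\dots,0,-\frac1k)$ lie in $\mathtt S_n$, satisfy $\|\mathbf a^{(k+1)}-\mathbf a^{(k)}\|_2^2+\|\mathbf b^{(k+1)}-\mathbf b^{(k)}\|_2^2\le 10/k^4$, while their inverse NLFTs satisfy $\|\boldsymbol\gamma^{(k+1)}-\boldsymbol\gamma^{(k)}\|_2\ge1/\sqrt2$.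
   Context: For $(\mathbf a,\mathbf b)\in\mathbb C^n\times\mathbb C^n$ let $a(z)=\sum_{k=0}^{n-1}a_kz^{-k}$, $b(z)=\sum_{k=0}^{n-1}b_kz^k$, and $a^*(z):=\overline{a(1/\overline z)}$ (similarly $b^*$). $\mathtt S_n$ is the set of $(\mathbf a,\mathbf b)$ with $a_0$ real and positive and $aa^*+bb^*=1$. The NLFT of $\boldsymbol\gamma$ supported in $\{0,\dots,n-1\}$ is $\prod_{k=0}^{n-1}\frac{1}{\sqrt{1+|\gamma_k|^2}}\begin{pmatrix}1&\gamma_kz^k\\-\overline{\gamma_k}z^{-k}&1\end{pmatrix}=\begin{pmatrix}a&b\\-b^*&a^*\end{pmatrix}$ (ordered by increasing $k$); it is a bijection from such sequences onto $\mathtt S_n$, and its inverse is the inverse NLFT. *)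

theory Defs
  imports Complex_Main
begin

text \<open>Vectors in C^n are represented as functions nat => complex vanishing at indices >= n.
  2x2 complex matrices are represented as quadruples (m11, m12, m21, m22).\<close>

type_synonym cmat2 = "complex \<times> complex \<times> complex \<times> complex"

definition mmult2 :: "cmat2 \<Rightarrow> cmat2 \<Rightarrow> cmat2" where
  "mmult2 M N = (case M of (a, b, c, d) \<Rightarrow> case N of (e, f, g, h) \<Rightarrow>
      (a * e + b * g, a * f + b * h, c * e + d * g, c * f + d * h))"

definition supp_in :: "nat \<Rightarrow> (nat \<Rightarrow> complex) \<Rightarrow> bool" where
  "supp_in n v \<longleftrightarrow> (\<forall>k\<ge>n. v k = 0)"

definition laur_a :: "nat \<Rightarrow> (nat \<Rightarrow> complex) \<Rightarrow> complex \<Rightarrow> complex" where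
  "laur_a n a z = (\<Sum>k<n. a k * inverse z ^ k)"

definition laur_b :: "nat \<Rightarrow> (nat \<Rightarrow> complex) \<Rightarrow> complex \<Rightarrow> complex" where
  "laur_b n b z = (\<Sum>k<n. b k * z ^ k)"

definition star :: "(complex \<Rightarrow> complex) \<Rightarrow> complex \<Rightarrow> complex" where
  "star f z = cnj (f (1 / cnj z))"

definition S_set :: "nat \<Rightarrow> ((nat \<Rightarrow> complex) \<times> (nat \<Rightarrow> complex)) set" where
  "S_set n = {(a, b). supp_in n a \<and> supp_in n b \<and> a 0 \<in> \<real> \<and> Re (a 0) > 0 \<and>
     (\<forall>z. z \<noteq> 0 \<longrightarrow>
        laur_a n a z * star (laur_a n a) z + laur_b n b z * star (laur_b n b) z = 1)}"

definition nlft_factor :: "complex \<Rightarrow> nat \<Rightarrow> complex \<Rightarrow> cmat2" where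
  "nlft_factor g k z = (let c = complex_of_real (1 / sqrt (1 + (cmod g)\<^sup>2)) in
     (c, c * g * z ^ k, - c * cnj g * inverse z ^ k, c))"

fun nlft_mat :: "nat \<Rightarrow> (nat \<Rightarrow> complex) \<Rightarrow> complex \<Rightarrow> cmat2" where
  "nlft_mat 0 g z = (1, 0, 0, 1)"
| "nlft_mat (Suc m) g z = mmult2 (nlft_mat m g z) (nlft_factor (g m) m z)"

definition is_nlft :: "nat \<Rightarrow> (nat \<Rightarrow> complex) \<Rightarrow> (nat \<Rightarrow> complex) \<Rightarrow> (nat \<Rightarrow> complex) \<Rightarrow> bool" where
  "is_nlft n g a b \<longleftrightarrow> supp_in n g \<and> supp_in n a \<and> supp_in n b \<and>
     (\<forall>z. z \<noteq> 0 \<longrightarrow> nlft_mat n g z =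
        (laur_a n a z, laur_b n b z, - star (laur_b n b) z, star (laur_a n a) z))"

definition inv_nlft :: "nat \<Rightarrow> (nat \<Rightarrow> complex) \<Rightarrow> (nat \<Rightarrow> complex) \<Rightarrow> (nat \<Rightarrow> complex)" where
  "inv_nlft n a b = (THE g. is_nlft n g a b)"

definition norm_n :: "nat \<Rightarrow> (nat \<Rightarrow> complex) \<Rightarrow> real" where
  "norm_n n v = sqrt (\<Sum>k<n. (cmod (v k))\<^sup>2)"

definition dist_pair :: "nat \<Rightarrow> (nat \<Rightarrow> complex) \<times> (nat \<Rightarrow> complex) \<Rightarrow> (nat \<Rightarrow> complex) \<times> (nat \<Rightarrow> complex) \<Rightarrow> real" where
  "dist_pair n p q = sqrt ((norm_n n (\<lambda>k. fst p k - fst q k))\<^sup>2 + (norm_n n (\<lambda>k. snd p k - snd q k))\<^sup>2)"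

definition ex_a :: "nat \<Rightarrow> nat \<Rightarrow> nat \<Rightarrow> complex" where
  "ex_a n k j = (if j = 0 then complex_of_real (1 / real k)
     else if j = n - 1 then complex_of_real (sqrt (1/2 - 1 / (real k)\<^sup>2)) else 0)"

definition ex_b :: "nat \<Rightarrow> nat \<Rightarrow> nat \<Rightarrow> complex" where
  "ex_b n k j = (if j = 0 then complex_of_real (sqrt (1/2 - 1 / (real k)\<^sup>2))
     else if j = n - 1 then complex_of_real (- 1 / real k) else 0)"

end

theory Submission
  imports Defs
begin


lemma rev_sum:
  fixes z :: complex
  assumes "z \<noteq> 0"
  shows "z ^ m * (\<Sum>i\<le>m. f i * inverse z ^ i) = (\<Sum>i\<le>m. f (m - i) * z ^ i)"
proof -
  have "z ^ m * (\<Sum>i\<le>m. f i * inverse z ^ i) = (\<Sum>i\<le>m. f i * z ^ (m - i))"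
    unfolding sum_distrib_left
  proof (rule sum.cong)
    fix i assume "i \<in> {..m}"
    then have "z ^ m = z ^ (m - i) * z ^ i" by (simp add: power_add[symmetric])
    then show "z ^ m * (f i * inverse z ^ i) = f i * z ^ (m - i)"
      using assms by (simp add: power_inverse field_simps)
  qed simp
  also have "\<dots> = (\<Sum>i\<le>m. f (m - i) * z ^ i)"
    by (rule sum.reindex_bij_witness[where i="\<lambda>i. m - i" and j="\<lambda>i. m - i"]) auto
  finally show ?thesis .
qed

definition ccf :: "complex \<Rightarrow> complex" where
  "ccf x = complex_of_real (1 / sqrt (1 + (cmod x)\<^sup>2))"

fun cf :: "nat \<Rightarrow> (nat \<Rightarrow> complex) \<Rightarrow> (nat \<Rightarrow> complex) \<times> (nat \<Rightarrow> complex)" where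
  "cf 0 g = ((\<lambda>i. if i = 0 then 1 else 0), (\<lambda>i. 0))"
| "cf (Suc m) g = (let al = fst (cf m g); be = snd (cf m g); c = ccf (g m) in
   ((\<lambda>i. c * ((if i \<le> m then al i else 0) - cnj (g m) * (if i \<le> m then be (m-i) else 0))),
    (\<lambda>i. c * ((if i \<le> m then be i else 0) + g m * (if i \<le> m then al (m-i) else 0)))))"

lemma cf_props:
  "snd (cf m g) m = 0 \<and> fst (cf m g) 0 = of_real (\<Prod>j<m. 1 / sqrt (1 + (cmod (g j))\<^sup>2)) \<and>
   (\<forall>z. z \<noteq> 0 \<longrightarrow> fst (nlft_mat m g z) = (\<Sum>i\<le>m. fst (cf m g) i * inverse z ^ i)
        \<and> fst (snd (nlft_mat m g z)) = (\<Sum>i\<le>m. snd (cf m g) i * z ^ i))"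
proof (induction m)
  case 0
  then show ?case by simp
next
  case (Suc m)
  define al where "al = fst (cf m g)"
  define be where "be = snd (cf m g)"
  define c where "c = ccf (g m)"
  have al': "fst (cf (Suc m) g) = (\<lambda>i. c * ((if i \<le> m then al i else 0) - cnj (g m) * (if i \<le> m then be (m-i) else 0)))"
    unfolding al_def be_def c_def by (simp add: Let_def)
  have be': "snd (cf (Suc m) g) = (\<lambda>i. c * ((if i \<le> m then be i else 0) + g m * (if i \<le> m then al (m-i) else 0)))"
    unfolding al_def be_def c_def by (simp add: Let_def)
  have bm: "be m = 0" using Suc.IH be_def by simp
  have a0: "al 0 = of_real (\<Prod>j<m. 1 / sqrt (1 + (cmod (g j))\<^sup>2))" using Suc.IH al_def by simp
  have p1: "snd (cf (Suc m) g) (Suc m) = 0" unfolding be' by simp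
  have p2: "fst (cf (Suc m) g) 0 = of_real (\<Prod>j<Suc m. 1 / sqrt (1 + (cmod (g j))\<^sup>2))"
    unfolding al' by (simp add: bm a0 c_def ccf_def mult.commute)
  have p3: "fst (nlft_mat (Suc m) g z) = (\<Sum>i\<le>Suc m. fst (cf (Suc m) g) i * inverse z ^ i)
        \<and> fst (snd (nlft_mat (Suc m) g z)) = (\<Sum>i\<le>Suc m. snd (cf (Suc m) g) i * z ^ i)" if z: "z \<noteq> 0" for z
  proof -
    obtain A B C D where M: "nlft_mat m g z = (A, B, C, D)" by (cases "nlft_mat m g z") auto
    have A: "A = (\<Sum>i\<le>m. al i * inverse z ^ i)" and B: "B = (\<Sum>i\<le>m. be i * z ^ i)"
      using Suc.IH z M al_def be_def by auto
    have F: "nlft_factor (g m) m z = (c, c * g m * z ^ m, - c * cnj (g m) * inverse z ^ m, c)"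
      by (simp add: nlft_factor_def c_def ccf_def Let_def)
    have top: "fst (nlft_mat (Suc m) g z) = c * (A - cnj (g m) * (inverse z ^ m * B))"
         "fst (snd (nlft_mat (Suc m) g z)) = c * (B + g m * (z ^ m * A))"
      by (simp_all add: M F mmult2_def algebra_simps)
    have r1: "inverse z ^ m * B = (\<Sum>i\<le>m. be (m - i) * inverse z ^ i)"
      using rev_sum[of "inverse z" m be] z B by simp
    have r2: "z ^ m * A = (\<Sum>i\<le>m. al (m - i) * z ^ i)"
      using rev_sum[of z m al] z A by simp
    have e1a: "(\<Sum>i\<le>Suc m. fst (cf (Suc m) g) i * inverse z ^ i)
       = (\<Sum>i\<le>m. c * (al i * inverse z ^ i) - c * cnj (g m) * (be (m - i) * inverse z ^ i))"
      unfolding al' sum.atMost_Suc by (simp, intro sum.cong) (auto simp: algebra_simps)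
    have e1: "(\<Sum>i\<le>Suc m. fst (cf (Suc m) g) i * inverse z ^ i)
       = c * ((\<Sum>i\<le>m. al i * inverse z ^ i) - cnj (g m) * (\<Sum>i\<le>m. be (m - i) * inverse z ^ i))"
      unfolding e1a sum_subtractf right_diff_distrib sum_distrib_left mult.assoc ..
    have e2a: "(\<Sum>i\<le>Suc m. snd (cf (Suc m) g) i * z ^ i)
       = (\<Sum>i\<le>m. c * (be i * z ^ i) + c * g m * (al (m - i) * z ^ i))"
      unfolding be' sum.atMost_Suc by (simp, intro sum.cong) (auto simp: algebra_simps)
    have e2: "(\<Sum>i\<le>Suc m. snd (cf (Suc m) g) i * z ^ i)
       = c * ((\<Sum>i\<le>m. be i * z ^ i) + g m * (\<Sum>i\<le>m. al (m - i) * z ^ i))"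
      unfolding e2a sum.distrib distrib_left sum_distrib_left mult.assoc ..
    show ?thesis using top r1 r2 e1 e2 A B by simp
  qed
  show ?case using p1 p2 p3 by blast
qed

lemma coeff_ext:
  fixes u v :: "nat \<Rightarrow> complex"
  assumes "\<forall>z. z \<noteq> 0 \<longrightarrow> (\<Sum>i\<le>N. u i * z ^ i) = (\<Sum>i\<le>N. v i * z ^ i)" "i \<le> N"
  shows "u i = v i"
proof -
  have sub: "UNIV - {0} \<subseteq> {z. (\<Sum>i\<le>N. (u i - v i) * z ^ i) = 0}"
    using assms(1) by (auto simp: left_diff_distrib sum_subtractf)
  have "infinite (UNIV - {0::complex})"
    by (simp add: infinite_UNIV_char_0)
  then have "infinite {z. (\<Sum>i\<le>N. (u i - v i) * z ^ i) = 0}"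
    using sub finite_subset by blast
  then have "\<not> (\<exists>i\<le>N. u i - v i \<noteq> 0)"
    using polyfun_finite_roots[of "\<lambda>i. u i - v i" N] by blast
  then show ?thesis using assms(2) by auto
qed

lemma mmult2_cancel:
  assumes "mmult2 X (e, f, g, h) = mmult2 Y (e, f, g, h)" "e * h - f * g \<noteq> (0::complex)"
  shows "X = Y"
proof -
  obtain a b c d where X: "X = (a, b, c, d)" by (cases X) auto
  obtain a' b' c' d' where Y: "Y = (a', b', c', d')" by (cases Y) auto
  have eq: "a * e + b * g = a' * e + b' * g" "a * f + b * h = a' * f + b' * h"
    "c * e + d * g = c' * e + d' * g" "c * f + d * h = c' * f + d' * h"
    using assms(1) by (simp_all add: X Y mmult2_def)
  have "(a - a') * (e * h - f * g) = h * ((a * e + b * g) - (a' * e + b' * g)) - g * ((a * f + b * h) - (a' * f + b' * h))"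
    by (simp add: algebra_simps)
  then have 1: "a = a'" using eq assms(2) by simp
  have "(b - b') * (e * h - f * g) = e * ((a * f + b * h) - (a' * f + b' * h)) - f * ((a * e + b * g) - (a' * e + b' * g))"
    by (simp add: algebra_simps)
  then have 2: "b = b'" using eq assms(2) by simp
  have "(c - c') * (e * h - f * g) = h * ((c * e + d * g) - (c' * e + d' * g)) - g * ((c * f + d * h) - (c' * f + d' * h))"
    by (simp add: algebra_simps)
  then have 3: "c = c'" using eq assms(2) by simp
  have "(d - d') * (e * h - f * g) = e * ((c * f + d * h) - (c' * f + d' * h)) - f * ((c * e + d * g) - (c' * e + d' * g))"
    by (simp add: algebra_simps)
  then have 4: "d = d'" using eq assms(2) by simp
  show ?thesis using 1 2 3 4 X Y by simp
qed

lemma factor_det: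
  assumes "z \<noteq> 0"
  shows "\<exists>e f g h. nlft_factor x m z = (e, f, g, h) \<and> e * h - f * g \<noteq> 0"
proof -
  define c where "c = complex_of_real (1 / sqrt (1 + (cmod x)\<^sup>2))"
  have F: "nlft_factor x m z = (c, c * x * z ^ m, - c * cnj x * inverse z ^ m, c)"
    by (simp add: nlft_factor_def c_def Let_def)
  have zz: "z ^ m * inverse z ^ m = 1" using assms by (simp add: power_inverse)
  have "c * c - c * x * z ^ m * (- c * cnj x * inverse z ^ m) = c * c * (1 + x * cnj x * (z ^ m * inverse z ^ m))"
    by (simp add: algebra_simps)
  also have "\<dots> = c * c * complex_of_real (1 + (cmod x)\<^sup>2)"
    using zz by (simp add: complex_norm_square[symmetric])
  finally have d: "c * c - c * x * z ^ m * (- c * cnj x * inverse z ^ m) = c * c * complex_of_real (1 + (cmod x)\<^sup>2)" .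
  have pos: "1 + (cmod x)\<^sup>2 > 0" by (simp add: add_pos_nonneg)
  have "c \<noteq> 0" using pos by (simp add: c_def)
  moreover have "complex_of_real (1 + (cmod x)\<^sup>2) \<noteq> 0" using pos by (simp only: of_real_eq_0_iff)
  ultimately have nz: "c * c * complex_of_real (1 + (cmod x)\<^sup>2) \<noteq> 0" by simp
  show ?thesis unfolding F
    by (rule exI[of _ c], rule exI[of _ "c * x * z ^ m"], rule exI[of _ "- c * cnj x * inverse z ^ m"],
        rule exI[of _ c]) (simp only: d nz, simp)
qed

lemma nlft_mat_inj:
  "(\<forall>z. z \<noteq> 0 \<longrightarrow> nlft_mat m g z = nlft_mat m g' z) \<Longrightarrow> j < m \<Longrightarrow> g j = g' j"
proof (induction m arbitrary: j)
  case 0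
  then show ?case by simp
next
  case (Suc m)
  define P where "P = (\<Prod>j<Suc m. 1 / sqrt (1 + (cmod (g j))\<^sup>2))"
  define P' where "P' = (\<Prod>j<Suc m. 1 / sqrt (1 + (cmod (g' j))\<^sup>2))"
  have Ppos: "P > 0" unfolding P_def by (intro prod_pos) (simp add: add_pos_nonneg)
  have cfS: "fst (cf (Suc m) g) 0 = of_real P" "fst (cf (Suc m) g') 0 = of_real P'"
    using cf_props[of "Suc m" g] cf_props[of "Suc m" g'] by (simp_all add: P_def P'_def)
  have cA: "\<forall>z. z \<noteq> 0 \<longrightarrow> fst (nlft_mat (Suc m) g z) = (\<Sum>i\<le>Suc m. fst (cf (Suc m) g) i * inverse z ^ i)"
    "\<forall>z. z \<noteq> 0 \<longrightarrow> fst (nlft_mat (Suc m) g' z) = (\<Sum>i\<le>Suc m. fst (cf (Suc m) g') i * inverse z ^ i)"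
    "\<forall>z. z \<noteq> 0 \<longrightarrow> fst (snd (nlft_mat (Suc m) g z)) = (\<Sum>i\<le>Suc m. snd (cf (Suc m) g) i * z ^ i)"
    "\<forall>z. z \<noteq> 0 \<longrightarrow> fst (snd (nlft_mat (Suc m) g' z)) = (\<Sum>i\<le>Suc m. snd (cf (Suc m) g') i * z ^ i)"
    using cf_props[of "Suc m" g] cf_props[of "Suc m" g'] by blast+
  have Aeq: "\<forall>w. w \<noteq> 0 \<longrightarrow> (\<Sum>i\<le>Suc m. fst (cf (Suc m) g) i * w ^ i) = (\<Sum>i\<le>Suc m. fst (cf (Suc m) g') i * w ^ i)"
  proof (intro allI impI)
    fix w :: complex assume w: "w \<noteq> 0"
    define z where "z = inverse w"
    have z: "z \<noteq> 0" and wz: "w = inverse z" using w by (simp_all add: z_def)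
    have e: "nlft_mat (Suc m) g z = nlft_mat (Suc m) g' z" using Suc.prems(1) z by blast
    show "(\<Sum>i\<le>Suc m. fst (cf (Suc m) g) i * w ^ i) = (\<Sum>i\<le>Suc m. fst (cf (Suc m) g') i * w ^ i)"
      unfolding wz using cA(1) cA(2) z e by metis
  qed
  have "of_real P = (of_real P' :: complex)" using coeff_ext[OF Aeq, of 0] cfS by simp
  then have PP: "P' = P" by simp
  have Beq: "\<forall>z. z \<noteq> 0 \<longrightarrow> (\<Sum>i\<le>Suc m. snd (cf (Suc m) g) i * z ^ i) = (\<Sum>i\<le>Suc m. snd (cf (Suc m) g') i * z ^ i)"
  proof (intro allI impI)
    fix z :: complex assume z: "z \<noteq> 0"
    have e: "nlft_mat (Suc m) g z = nlft_mat (Suc m) g' z" using Suc.prems(1) z by blast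
    show "(\<Sum>i\<le>Suc m. snd (cf (Suc m) g) i * z ^ i) = (\<Sum>i\<le>Suc m. snd (cf (Suc m) g') i * z ^ i)"
      using cA(3) cA(4) z e by metis
  qed
  have bm: "snd (cf (Suc m) g) m = of_real P * g m" "snd (cf (Suc m) g') m = of_real P' * g' m"
    using cf_props[of m g] cf_props[of m g'] by (simp_all add: Let_def ccf_def P_def P'_def)
  have "of_real P * g m = of_real P * g' m" using coeff_ext[OF Beq, of m] bm PP by simp
  then have gm: "g m = g' m" using Ppos by simp
  have "nlft_mat m g z = nlft_mat m g' z" if z: "z \<noteq> 0" for z
  proof -
    obtain e f gg h where F: "nlft_factor (g m) m z = (e, f, gg, h)" "e * h - f * gg \<noteq> 0"
      using factor_det[OF z] by blast
    have "mmult2 (nlft_mat m g z) (e, f, gg, h) = mmult2 (nlft_mat m g' z) (e, f, gg, h)"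
      using Suc.prems(1) z F(1) gm by (metis nlft_mat.simps(2))
    then show ?thesis using mmult2_cancel F(2) by blast
  qed
  then have IH: "\<And>j. j < m \<Longrightarrow> g j = g' j" using Suc.IH by blast
  show ?case using Suc.prems(2) IH gm by (cases "j = m") auto
qed

lemma is_nlft_unique:
  assumes "is_nlft n g a b" "is_nlft n g' a b"
  shows "g = g'"
proof
  fix j
  show "g j = g' j"
  proof (cases "j < n")
    case True
    have "\<forall>z. z \<noteq> 0 \<longrightarrow> nlft_mat n g z = nlft_mat n g' z"
      using assms unfolding is_nlft_def by auto
    then show ?thesis using nlft_mat_inj True by blast
  next
    case False
    then show ?thesis using assms unfolding is_nlft_def supp_in_def by auto
  qed
qed



lemma sum_two:
  fixes h :: "nat \<Rightarrow> 'a::comm_monoid_add"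
  assumes "n \<ge> 2" "\<And>j. j < n \<Longrightarrow> j \<noteq> 0 \<Longrightarrow> j \<noteq> n - 1 \<Longrightarrow> h j = 0"
  shows "(\<Sum>j<n. h j) = h 0 + h (n - 1)"
proof -
  have "(\<Sum>j<n. h j) = (\<Sum>j\<in>{0, n - 1}. h j)"
    by (rule sum.mono_neutral_right) (use assms in auto)
  also have "\<dots> = h 0 + h (n - 1)" using assms(1) by simp
  finally show ?thesis .
qed

definition tk :: "nat \<Rightarrow> real" where "tk k = sqrt (1/2 - 1 / (real k)\<^sup>2)"

definition gam :: "nat \<Rightarrow> nat \<Rightarrow> nat \<Rightarrow> complex" where
  "gam n k j = (if j = 0 then complex_of_real (real k * tk k) else if j = n - 1 then -1 else 0)"

lemma tk_sq: "k \<ge> 2 \<Longrightarrow> (tk k)\<^sup>2 = 1/2 - 1 / (real k)\<^sup>2"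
proof -
  assume k: "k \<ge> 2"
  have "(real k)\<^sup>2 \<ge> 4" using k
    by (metis numeral_le_real_of_nat_iff power2_le_iff_abs_le abs_of_nonneg of_nat_0_le_iff
        real_sqrt_four real_sqrt_le_iff real_sqrt_pow2 zero_le_numeral mult_2 numeral_Bit0 numeral_One)
  then have "1 / (real k)\<^sup>2 \<le> 1/4" by (simp add: divide_simps)
  then show ?thesis by (simp add: tk_def)
qed

lemma laur_ex:
  assumes n: "n \<ge> 2"
  shows "laur_a n (ex_a n k) z = of_real (1 / real k) + of_real (tk k) * inverse z ^ (n - 1)"
    "star (laur_a n (ex_a n k)) z = of_real (1 / real k) + of_real (tk k) * z ^ (n - 1)"
    "laur_b n (ex_b n k) z = of_real (tk k) - of_real (1 / real k) * z ^ (n - 1)"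
    "star (laur_b n (ex_b n k)) z = of_real (tk k) - of_real (1 / real k) * inverse z ^ (n - 1)"
proof -
  have a: "laur_a n (ex_a n k) w = of_real (1 / real k) + of_real (tk k) * inverse w ^ (n - 1)" for w
    unfolding laur_a_def using n
    by (subst sum_two) (auto simp: ex_a_def tk_def)
  have b: "laur_b n (ex_b n k) w = of_real (tk k) - of_real (1 / real k) * w ^ (n - 1)" for w
    unfolding laur_b_def using n
    by (subst sum_two) (auto simp: ex_b_def tk_def)
  show "laur_a n (ex_a n k) z = of_real (1 / real k) + of_real (tk k) * inverse z ^ (n - 1)" by (rule a)
  show "laur_b n (ex_b n k) z = of_real (tk k) - of_real (1 / real k) * z ^ (n - 1)" by (rule b)
  show "star (laur_a n (ex_a n k)) z = of_real (1 / real k) + of_real (tk k) * z ^ (n - 1)"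
    unfolding star_def a by simp
  show "star (laur_b n (ex_b n k)) z = of_real (tk k) - of_real (1 / real k) * inverse z ^ (n - 1)"
    unfolding star_def b by (simp add: divide_inverse power_inverse)
qed

lemma ex_in_S:
  assumes n: "n \<ge> 2" and k: "k \<ge> 2"
  shows "(ex_a n k, ex_b n k) \<in> S_set n"
proof -
  have sa: "supp_in n (ex_a n k)" "supp_in n (ex_b n k)"
    using n by (auto simp: supp_in_def ex_a_def ex_b_def)
  have a0: "ex_a n k 0 \<in> \<real>" "Re (ex_a n k 0) > 0" using k by (auto simp: ex_a_def)
  have id: "laur_a n (ex_a n k) z * star (laur_a n (ex_a n k)) z + laur_b n (ex_b n k) z * star (laur_b n (ex_b n k)) z = 1"
    if z: "z \<noteq> 0" for z
  proof -
    define x where "x = complex_of_real (1 / real k)"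
    define t where "t = complex_of_real (tk k)"
    define Z where "Z = z ^ (n - 1)"
    define W where "W = inverse z ^ (n - 1)"
    have ZW: "Z * W = 1" using z by (simp add: Z_def W_def power_inverse)
    have sq: "x * x + t * t = 1 / 2"
    proof -
      have "(tk k)\<^sup>2 + (1 / real k)\<^sup>2 = 1/2" using tk_sq[OF k] by (simp add: power_divide)
      then have r: "(1 / real k) * (1 / real k) + tk k * tk k = 1/2" by (simp add: power2_eq_square)
      have "x * x + t * t = complex_of_real ((1 / real k) * (1 / real k) + tk k * tk k)"
        unfolding x_def t_def by (simp only: of_real_add of_real_mult)
      then have "x * x + t * t = complex_of_real (1/2)" unfolding r .
      then show ?thesis by simp
    qed
    have "(x + t * W) * (x + t * Z) + (t - x * Z) * (t - x * W) = (x * x + t * t) + (x * x + t * t) * (Z * W)"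
      by (simp add: algebra_simps)
    also have "\<dots> = 1" using sq ZW by (simp add: algebra_simps)
    finally show ?thesis using laur_ex[OF n] by (simp add: x_def t_def Z_def W_def)
  qed
  show ?thesis unfolding S_set_def using sa a0 id by auto
qed

lemma mmult2_id: "mmult2 (1, 0, 0, 1) M = M" "mmult2 M (1, 0, 0, 1) = M"
  by (cases M; auto simp: mmult2_def)+

lemma nlft_mid:
  assumes n: "n \<ge> 2"
  shows "1 \<le> m \<Longrightarrow> m \<le> n - 1 \<Longrightarrow> nlft_mat m (gam n k) z = nlft_factor (gam n k 0) 0 z"
proof (induction m)
  case 0
  then show ?case by simp
next
  case (Suc m)
  show ?case
  proof (cases "m = 0")
    case True
    then show ?thesis by (simp add: mmult2_id)
  next
    case False
    then have "gam n k m = 0" using Suc.prems by (simp add: gam_def)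
    then have "nlft_factor (gam n k m) m z = (1, 0, 0, 1)" by (simp add: nlft_factor_def)
    then show ?thesis using Suc False by (simp add: mmult2_id)
  qed
qed


lemma ksq: "k \<ge> 2 \<Longrightarrow> (real k)\<^sup>2 \<ge> 4"
proof -
  assume "k \<ge> 2"
  then have "real k \<ge> 2" by simp
  then have "(real k)\<^sup>2 \<ge> 2\<^sup>2" by (rule power_mono) simp
  then show ?thesis by simp
qed

lemma tk_nonneg: "k \<ge> 2 \<Longrightarrow> tk k \<ge> 0"
proof -
  assume k: "k \<ge> 2"
  have "1 / (real k)\<^sup>2 \<le> 1/2" using ksq[OF k] by (simp add: divide_simps)
  then show ?thesis by (simp add: tk_def)
qed

lemma c_prod:
  assumes k: "k \<ge> 2"
  shows "(1 / sqrt (1 + (real k * tk k)\<^sup>2)) * (1 / sqrt (1 + 1)) = 1 / real k"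
proof -
  have "(real k * tk k)\<^sup>2 = (real k)\<^sup>2 * (tk k)\<^sup>2" by (simp add: power_mult_distrib)
  also have "\<dots> = (real k)\<^sup>2 * (1/2 - 1 / (real k)\<^sup>2)" using tk_sq[OF k] by simp
  also have "\<dots> = (real k)\<^sup>2 / 2 - 1" using k by (simp add: field_simps)
  finally have "(real k * tk k)\<^sup>2 = (real k)\<^sup>2 / 2 - 1" .
  then have "1 + (real k * tk k)\<^sup>2 = (real k)\<^sup>2 / 2" by simp
  then have "sqrt (1 + (real k * tk k)\<^sup>2) * sqrt 2 = real k"
    by (simp add: real_sqrt_mult[symmetric])
  then show ?thesis by (simp add: divide_simps)
qed

lemma gam_is_nlft:
  assumes n: "n \<ge> 2" and k: "k \<ge> 2"
  shows "is_nlft n (gam n k) (ex_a n k) (ex_b n k)"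
proof -
  have supp: "supp_in n (gam n k)" "supp_in n (ex_a n k)" "supp_in n (ex_b n k)"
    using n by (auto simp: supp_in_def gam_def ex_a_def ex_b_def)
  have mat: "nlft_mat n (gam n k) z =
        (laur_a n (ex_a n k) z, laur_b n (ex_b n k) z, - star (laur_b n (ex_b n k)) z, star (laur_a n (ex_a n k)) z)"
    if z: "z \<noteq> 0" for z
  proof -
    define m where "m = n - 1"
    have nm: "n = Suc m" using n m_def by simp
    define g0 where "g0 = complex_of_real (real k * tk k)"
    define c0 where "c0 = complex_of_real (1 / sqrt (1 + (real k * tk k)\<^sup>2))"
    define c1 where "c1 = complex_of_real (1 / sqrt (1 + 1))"
    define x where "x = complex_of_real (1 / real k)"
    define t where "t = complex_of_real (tk k)"
    define Z where "Z = z ^ m"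
    define W where "W = inverse z ^ m"
    have cc: "c0 * c1 = x" using c_prod[OF k] unfolding c0_def c1_def x_def
      by (metis of_real_mult)
    have kk: "(1 / real k) * (real k * tk k) = tk k" using k by simp
    have ccg: "c0 * c1 * g0 = t" unfolding cc x_def g0_def t_def of_real_mult[symmetric] kk ..
    have ga: "gam n k 0 = g0" by (simp add: gam_def g0_def)
    have cnjg: "cnj g0 = g0" by (simp add: g0_def)
    have cm: "cmod g0 = real k * tk k" unfolding g0_def norm_of_real using tk_nonneg[OF k] by simp
    have F0: "nlft_factor (gam n k 0) 0 z = (c0, c0 * g0, - (c0 * g0), c0)"
      unfolding ga nlft_factor_def Let_def cm c0_def[symmetric] by (simp add: cnjg)
    have g1: "gam n k m = -1" using n by (simp add: gam_def m_def)
    have F1: "nlft_factor (gam n k m) m z = (c1, - (c1 * Z), c1 * W, c1)"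
      unfolding g1 by (simp add: nlft_factor_def c1_def Z_def W_def Let_def)
    have mid: "nlft_mat m (gam n k) z = nlft_factor (gam n k 0) 0 z"
      using nlft_mid[OF n, of m k z] n m_def by simp
    have "nlft_mat n (gam n k) z = mmult2 (c0, c0 * g0, - (c0 * g0), c0) (c1, - (c1 * Z), c1 * W, c1)"
    proof -
      have "nlft_mat (Suc m) (gam n k) z = mmult2 (nlft_mat m (gam n k) z) (nlft_factor (gam n k m) m z)"
        by simp
      then show ?thesis unfolding mid F0 F1 nm[symmetric] .
    qed
    also have "\<dots> = (c0 * c1 + (c0 * c1 * g0) * W, (c0 * c1 * g0) - (c0 * c1) * Z,
        - ((c0 * c1 * g0) - (c0 * c1) * W), (c0 * c1) + (c0 * c1 * g0) * Z)"
      by (simp add: mmult2_def algebra_simps)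
    also have "\<dots> = (x + t * W, t - x * Z, - (t - x * W), x + t * Z)"
      using ccg unfolding cc by simp
    finally show ?thesis using laur_ex[OF n] by (simp add: x_def t_def Z_def W_def m_def)
  qed
  show ?thesis unfolding is_nlft_def using supp mat by blast
qed

lemma inv_ex:
  assumes n: "n \<ge> 2" and k: "k \<ge> 2"
  shows "inv_nlft n (ex_a n k) (ex_b n k) = gam n k"
  unfolding inv_nlft_def
proof (rule the_equality)
  show "is_nlft n (gam n k) (ex_a n k) (ex_b n k)" by (rule gam_is_nlft[OF n k])
  fix g assume "is_nlft n g (ex_a n k) (ex_b n k)"
  then show "g = gam n k" using is_nlft_unique gam_is_nlft[OF n k] by blast
qed



lemma norm_two:
  assumes n: "n \<ge> 2" and v: "\<And>j. j < n \<Longrightarrow> j \<noteq> 0 \<Longrightarrow> j \<noteq> n - 1 \<Longrightarrow> v j = 0"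
  shows "norm_n n v = sqrt ((cmod (v 0))\<^sup>2 + (cmod (v (n - 1)))\<^sup>2)"
  unfolding norm_n_def using n v by (subst sum_two) auto

lemma fsq: "k \<ge> 2 \<Longrightarrow> (real k * tk k)\<^sup>2 = (real k)\<^sup>2 / 2 - 1"
proof -
  assume k: "k \<ge> 2"
  have "(real k * tk k)\<^sup>2 = (real k)\<^sup>2 * (tk k)\<^sup>2" by (simp add: power_mult_distrib)
  also have "\<dots> = (real k)\<^sup>2 * (1/2 - 1 / (real k)\<^sup>2)" using tk_sq[OF k] by simp
  also have "\<dots> = (real k)\<^sup>2 / 2 - 1" using k by (simp add: field_simps)
  finally show ?thesis .
qed

lemma tk_ge: "k \<ge> 2 \<Longrightarrow> tk k \<ge> 1/2"
proof -
  assume k: "k \<ge> 2"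
  have "1 / (real k)\<^sup>2 \<le> 1/4" using ksq[OF k] by (simp add: divide_simps)
  then have "(tk k)\<^sup>2 \<ge> (1/2)\<^sup>2" using tk_sq[OF k] by (simp add: power2_eq_square)
  then show ?thesis using tk_nonneg[OF k] by (rule power2_le_imp_le)
qed

lemma bound_ab:
  assumes n: "n \<ge> 2" and k: "k \<ge> 2"
  shows "(norm_n n (\<lambda>j. ex_a n (k+1) j - ex_a n k j))\<^sup>2
                + (norm_n n (\<lambda>j. ex_b n (k+1) j - ex_b n k j))\<^sup>2 \<le> 10 / (real k) ^ 4"
proof -
  define d1 where "d1 = 1 / real k - 1 / real (k + 1)"
  define d2 where "d2 = tk (k + 1) - tk k"
  have n1: "n - 1 \<noteq> 0" using n by simp
  have Na: "norm_n n (\<lambda>j. ex_a n (k+1) j - ex_a n k j) = sqrt (d1\<^sup>2 + d2\<^sup>2)"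
  proof -
    have "norm_n n (\<lambda>j. ex_a n (k+1) j - ex_a n k j) = sqrt ((cmod (ex_a n (k+1) 0 - ex_a n k 0))\<^sup>2 + (cmod (ex_a n (k+1) (n-1) - ex_a n k (n-1)))\<^sup>2)"
      using n by (intro norm_two) (auto simp: ex_a_def)
    also have "ex_a n (k+1) 0 - ex_a n k 0 = of_real (- d1)" by (simp add: ex_a_def d1_def)
    also have "ex_a n (k+1) (n-1) - ex_a n k (n-1) = of_real d2" using n1 by (simp add: ex_a_def d2_def tk_def)
    finally show ?thesis by (simp only: norm_of_real power2_abs) simp
  qed
  have Nb: "norm_n n (\<lambda>j. ex_b n (k+1) j - ex_b n k j) = sqrt (d1\<^sup>2 + d2\<^sup>2)"
  proof -
    have "norm_n n (\<lambda>j. ex_b n (k+1) j - ex_b n k j) = sqrt ((cmod (ex_b n (k+1) 0 - ex_b n k 0))\<^sup>2 + (cmod (ex_b n (k+1) (n-1) - ex_b n k (n-1)))\<^sup>2)"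
      using n by (intro norm_two) (auto simp: ex_b_def)
    also have "ex_b n (k+1) 0 - ex_b n k 0 = of_real d2" by (simp add: ex_b_def d2_def tk_def)
    also have "ex_b n (k+1) (n-1) - ex_b n k (n-1) = of_real d1" using n1 by (simp add: ex_b_def d1_def)
    finally show ?thesis by (simp only: norm_of_real power2_abs) (simp add: add.commute)
  qed
  have kpos: "real k > 0" using k by simp
  have d1e: "d1 = 1 / (real k * (real k + 1))" using kpos by (simp add: d1_def field_simps)
  have d1: "0 \<le> d1" "d1 \<le> 1 / (real k)\<^sup>2"
  proof -
    show "0 \<le> d1" unfolding d1e using kpos by simp
    have "real k * real k \<le> real k * (real k + 1)" using kpos by simp
    then show "d1 \<le> 1 / (real k)\<^sup>2" unfolding d1e power2_eq_square
      using kpos by (intro divide_left_mono) auto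
  qed
  have k2: "k + 1 \<ge> 2" using k by simp
  have sqd: "(tk (k+1))\<^sup>2 - (tk k)\<^sup>2 = 1 / (real k)\<^sup>2 - 1 / (real (k+1))\<^sup>2"
    using tk_sq[OF k] tk_sq[OF k2] by simp
  have "1 / (real (k+1))\<^sup>2 \<le> 1 / (real k)\<^sup>2"
    using kpos by (intro divide_left_mono power_mono) auto
  then have sqd2: "0 \<le> (tk (k+1))\<^sup>2 - (tk k)\<^sup>2" "(tk (k+1))\<^sup>2 - (tk k)\<^sup>2 \<le> 1 / (real k)\<^sup>2"
    using sqd by simp_all
  have t1: "tk k \<ge> 1/2" "tk (k+1) \<ge> 1/2" using tk_ge[OF k] tk_ge[OF k2] by auto
  have "(tk k)\<^sup>2 \<le> (tk (k+1))\<^sup>2" using sqd2(1) by linarith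
  then have "tk k \<le> tk (k+1)" by (rule power2_le_imp_le) (use t1 in linarith)
  then have d2p: "0 \<le> d2" by (simp add: d2_def)
  have "d2 * (tk (k+1) + tk k) = (tk (k+1))\<^sup>2 - (tk k)\<^sup>2"
    by (simp add: d2_def power2_eq_square algebra_simps)
  moreover have "d2 \<le> d2 * (tk (k+1) + tk k)"
    using d2p t1 mult_left_mono[of 1 "tk (k+1) + tk k" d2] by simp
  ultimately have d2: "d2 \<le> 1 / (real k)\<^sup>2" using sqd2(2) by simp
  have e1: "d1\<^sup>2 \<le> (1 / (real k)\<^sup>2)\<^sup>2" using d1 by (intro power_mono) auto
  have e2: "d2\<^sup>2 \<le> (1 / (real k)\<^sup>2)\<^sup>2" using d2 d2p by (intro power_mono) auto
  have e3: "(1 / (real k)\<^sup>2)\<^sup>2 = 1 / (real k) ^ 4" by (simp add: power_divide power_mult[symmetric])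
  have "(norm_n n (\<lambda>j. ex_a n (k+1) j - ex_a n k j))\<^sup>2
                + (norm_n n (\<lambda>j. ex_b n (k+1) j - ex_b n k j))\<^sup>2 = 2 * (d1\<^sup>2 + d2\<^sup>2)"
    unfolding Na Nb by simp
  also have "\<dots> \<le> 4 / (real k) ^ 4" using e1 e2 e3 by simp
  also have "\<dots> \<le> 10 / (real k) ^ 4" using kpos by (simp add: divide_right_mono)
  finally show ?thesis .
qed

lemma bound_gam:
  assumes n: "n \<ge> 2" and k: "k \<ge> 2"
  shows "norm_n n (\<lambda>j. gam n (k+1) j - gam n k j) \<ge> 1 / sqrt 2"
proof -
  define u where "u = real k * tk k"
  define v where "v = real (k+1) * tk (k+1)"
  define r where "r = 1 / sqrt 2"
  have k2: "k + 1 \<ge> 2" using k by simp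
  have N: "norm_n n (\<lambda>j. gam n (k+1) j - gam n k j) = \<bar>v - u\<bar>"
  proof -
    have "norm_n n (\<lambda>j. gam n (k+1) j - gam n k j) = sqrt ((cmod (gam n (k+1) 0 - gam n k 0))\<^sup>2 + (cmod (gam n (k+1) (n-1) - gam n k (n-1)))\<^sup>2)"
      using n by (intro norm_two) (auto simp: gam_def)
    also have "gam n (k+1) 0 - gam n k 0 = of_real (v - u)" by (simp add: gam_def u_def v_def)
    also have "gam n (k+1) (n-1) - gam n k (n-1) = 0" using n by (simp add: gam_def)
    finally show ?thesis by (simp only: norm_of_real) simp
  qed
  have r2: "r\<^sup>2 = 1/2" by (simp add: r_def power_divide)
  have rp: "r > 0" by (simp add: r_def)
  have u0: "u \<ge> 0" "v \<ge> 0" using tk_nonneg[OF k] tk_nonneg[OF k2] by (simp_all add: u_def v_def)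
  have usq: "u\<^sup>2 = (real k)\<^sup>2 / 2 - 1" using fsq[OF k] by (simp add: u_def)
  have vsq: "v\<^sup>2 = (real k + 1)\<^sup>2 / 2 - 1" using fsq[OF k2] by (simp add: v_def)
  have "(real k * r)\<^sup>2 = (real k)\<^sup>2 / 2" by (simp add: power_mult_distrib r2)
  then have "u\<^sup>2 \<le> (real k * r)\<^sup>2" using usq by linarith
  moreover have "0 \<le> real k * r" using rp by simp
  ultimately have ub: "u \<le> real k * r" by (rule power2_le_imp_le)
  have "((real k + 1) * r)\<^sup>2 = (real k + 1)\<^sup>2 / 2" by (simp add: power_mult_distrib r2)
  then have "v\<^sup>2 \<le> ((real k + 1) * r)\<^sup>2" using vsq by linarith
  moreover have "0 \<le> (real k + 1) * r" using rp by simp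
  ultimately have vb: "v \<le> (real k + 1) * r" by (rule power2_le_imp_le)
  have diff: "(v - u) * (v + u) = (2 * real k + 1) * r\<^sup>2"
  proof -
    have "(v - u) * (v + u) = v\<^sup>2 - u\<^sup>2" by (simp add: power2_eq_square algebra_simps)
    also have "\<dots> = (2 * real k + 1) / 2" unfolding usq vsq by (simp add: power2_eq_square field_simps)
    finally have "(v - u) * (v + u) = (2 * real k + 1) / 2" .
    then show ?thesis unfolding r2 by simp
  qed
  have "u\<^sup>2 \<le> v\<^sup>2" using usq vsq by (simp add: power2_eq_square field_simps)
  then have vu: "u \<le> v" by (rule power2_le_imp_le) (use u0 in linarith)
  have "(v - u) * (v + u) \<le> (v - u) * ((2 * real k + 1) * r)"
  proof (rule mult_left_mono)
    show "v + u \<le> (2 * real k + 1) * r" using ub vb by (simp add: algebra_simps)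
  qed (use vu in simp)
  then have "((2 * real k + 1) * r) * r \<le> ((2 * real k + 1) * r) * (v - u)"
    using diff by (simp add: power2_eq_square algebra_simps)
  moreover have "(2 * real k + 1) * r > 0" using rp by simp
  ultimately have "r * r \<le> r * (v - u)" by simp
  then have "r \<le> v - u" using rp mult_le_cancel_left_pos[of r r "v - u"] by simp
  then show ?thesis using N vu by (simp add: r_def)
qed



theorem mainTheorem10:
  fixes n :: nat
  assumes "n \<ge> 2"
  shows "\<not> (\<forall>\<epsilon>>0. \<exists>\<delta>>0. \<forall>p\<in>S_set n. \<forall>q\<in>S_set n.
             dist_pair n p q < \<delta> \<longrightarrow>
             norm_n n (\<lambda>j. inv_nlft n (fst p) (snd p) j - inv_nlft n (fst q) (snd q) j) < \<epsilon>)
         \<and> (\<forall>k::nat. k \<ge> 2 \<longrightarrow>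
              (ex_a n k, ex_b n k) \<in> S_set n
            \<and> (norm_n n (\<lambda>j. ex_a n (k+1) j - ex_a n k j))\<^sup>2
                + (norm_n n (\<lambda>j. ex_b n (k+1) j - ex_b n k j))\<^sup>2 \<le> 10 / (real k) ^ 4
            \<and> norm_n n (\<lambda>j. inv_nlft n (ex_a n (k+1)) (ex_b n (k+1)) j
                             - inv_nlft n (ex_a n k) (ex_b n k) j) \<ge> 1 / sqrt 2)"
proof -
  have part2: "\<forall>k::nat. k \<ge> 2 \<longrightarrow>
              (ex_a n k, ex_b n k) \<in> S_set n
            \<and> (norm_n n (\<lambda>j. ex_a n (k+1) j - ex_a n k j))\<^sup>2
                + (norm_n n (\<lambda>j. ex_b n (k+1) j - ex_b n k j))\<^sup>2 \<le> 10 / (real k) ^ 4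
            \<and> norm_n n (\<lambda>j. inv_nlft n (ex_a n (k+1)) (ex_b n (k+1)) j
                             - inv_nlft n (ex_a n k) (ex_b n k) j) \<ge> 1 / sqrt 2"
  proof (intro allI impI conjI)
    fix k :: nat assume k: "k \<ge> 2"
    have k1: "k + 1 \<ge> 2" using k by simp
    show "(ex_a n k, ex_b n k) \<in> S_set n" by (rule ex_in_S[OF assms k])
    show "(norm_n n (\<lambda>j. ex_a n (k+1) j - ex_a n k j))\<^sup>2
                + (norm_n n (\<lambda>j. ex_b n (k+1) j - ex_b n k j))\<^sup>2 \<le> 10 / (real k) ^ 4"
      by (rule bound_ab[OF assms k])
    show "norm_n n (\<lambda>j. inv_nlft n (ex_a n (k+1)) (ex_b n (k+1)) j
                             - inv_nlft n (ex_a n k) (ex_b n k) j) \<ge> 1 / sqrt 2"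
      unfolding inv_ex[OF assms k] inv_ex[OF assms k1] by (rule bound_gam[OF assms k])
  qed
  have part1: "\<not> (\<forall>\<epsilon>>0. \<exists>\<delta>>0. \<forall>p\<in>S_set n. \<forall>q\<in>S_set n.
             dist_pair n p q < \<delta> \<longrightarrow>
             norm_n n (\<lambda>j. inv_nlft n (fst p) (snd p) j - inv_nlft n (fst q) (snd q) j) < \<epsilon>)"
  proof
    assume H: "\<forall>\<epsilon>>0. \<exists>\<delta>>0. \<forall>p\<in>S_set n. \<forall>q\<in>S_set n.
             dist_pair n p q < \<delta> \<longrightarrow>
             norm_n n (\<lambda>j. inv_nlft n (fst p) (snd p) j - inv_nlft n (fst q) (snd q) j) < \<epsilon>"
    obtain \<delta> where dpos: "\<delta> > 0" and D: "\<forall>p\<in>S_set n. \<forall>q\<in>S_set n.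
             dist_pair n p q < \<delta> \<longrightarrow>
             norm_n n (\<lambda>j. inv_nlft n (fst p) (snd p) j - inv_nlft n (fst q) (snd q) j) < 1/2"
      using H[rule_format, of "1/2"] by auto
    define k where "k = nat \<lceil>10 / \<delta>\<^sup>2\<rceil> + 2"
    have k: "k \<ge> 2" by (simp add: k_def)
    have k1: "k + 1 \<ge> 2" using k by simp
    have kbig: "real k > 10 / \<delta>\<^sup>2"
    proof -
      have c: "of_int \<lceil>10 / \<delta>\<^sup>2\<rceil> \<ge> 10 / \<delta>\<^sup>2" by (rule le_of_int_ceiling)
      have "real k = 2 + real_of_int \<lceil>10 / \<delta>\<^sup>2\<rceil>" by (simp add: k_def)
      then show ?thesis using c by linarith
    qed
    have kpos: "real k > 0" using k by simp
    have "real k \<le> real k ^ 4"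
    proof -
      have "real k ^ 1 \<le> real k ^ 4" using k by (intro power_increasing) auto
      then show ?thesis by simp
    qed
    then have "10 / \<delta>\<^sup>2 < real k ^ 4" using kbig by linarith
    then have "10 < \<delta>\<^sup>2 * real k ^ 4" using dpos by (simp add: field_simps)
    then have small: "10 / real k ^ 4 < \<delta>\<^sup>2" using kpos by (simp add: field_simps)
    define p where "p = (ex_a n (k+1), ex_b n (k+1))"
    define q where "q = (ex_a n k, ex_b n k)"
    have pS: "p \<in> S_set n" unfolding p_def by (rule ex_in_S[OF assms k1])
    have qS: "q \<in> S_set n" unfolding q_def by (rule ex_in_S[OF assms k])
    have "dist_pair n p q = sqrt ((norm_n n (\<lambda>j. ex_a n (k+1) j - ex_a n k j))\<^sup>2
                + (norm_n n (\<lambda>j. ex_b n (k+1) j - ex_b n k j))\<^sup>2)"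
      by (simp add: dist_pair_def p_def q_def)
    also have "\<dots> \<le> sqrt (10 / real k ^ 4)" using bound_ab[OF assms k] by simp
    also have "\<dots> < sqrt (\<delta>\<^sup>2)" by (rule real_sqrt_less_mono[OF small])
    also have "\<dots> = \<delta>" using dpos by simp
    finally have "dist_pair n p q < \<delta>" .
    then have "norm_n n (\<lambda>j. inv_nlft n (fst p) (snd p) j - inv_nlft n (fst q) (snd q) j) < 1/2"
      using D pS qS by blast
    moreover have "norm_n n (\<lambda>j. inv_nlft n (fst p) (snd p) j - inv_nlft n (fst q) (snd q) j) \<ge> 1 / sqrt 2"
      using part2 k by (simp add: p_def q_def)
    moreover have "1 / sqrt 2 > (1/2 :: real)"
    proof -
      have "sqrt 2 < sqrt (4::real)" by (rule real_sqrt_less_mono) simp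
      then have "sqrt 2 < (2::real)" by simp
      then show ?thesis by (simp add: divide_simps)
    qed
    ultimately show False by linarith
  qed
  show ?thesis using part1 part2 by blast
qed


end
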